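(* For every integer $m\geq 0$, $T(\Lambda_{m+1})\subseteq\Lambda_m$, i.e. $T(n)\in\Lambda_m$ for every $n\in\Lambda_{m+1}$.
   Context: $\mathbb{N}=\{1,2,3,\dots\}$, $\mathbb{N}_0=\mathbb{N}\cup\{0\}$. The Collatz map $T:\mathbb{N}\to\mathbb{N}$ is $T(n)=\frac{3n+1}{2}$ if $n$ is odd and $T(n)=\frac{n}{2}$ if $n$ is even. For $0\leq m\leq 3$ let $\Lambda_m=\{2^m\}$, and for $m\geq 4$ let $\Lambda_m$ be the set of all $n\in\mathbb{N}$ that can be written as $n=\frac{2^m}{3^l}-\sum_{k=1}^{l}\frac{2^{b_k}}{3^k}$ for some integers $l,b_1,\dots,b_l\in\mathbb{N}_0$ with $0\leq l\leq m-3$ and $0\leq b_1<b_2<\cdots<b_l\leq m-4$ (for $l=0$ the sum is empty). *)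

theory Defs
  imports Main "HOL.Rat"
begin

definition collatzT :: "nat \<Rightarrow> nat" where
  "collatzT n = (if odd n then (3 * n + 1) div 2 else n div 2)"

text \<open>Lambda m. The sequence b_1,...,b_l is given by a function b :: nat => nat,
  only its values at 1..l matter.\<close>
definition Lambda :: "nat \<Rightarrow> nat set" where
  "Lambda m = (if m \<le> 3 then {2 ^ m} else
     {n. n \<ge> 1 \<and> (\<exists>l (b :: nat \<Rightarrow> nat).
          l \<le> m - 3 \<and>
          (\<forall>k. 1 \<le> k \<and> k < l \<longrightarrow> b k < b (Suc k)) \<and>
          (\<forall>k\<in>{1..l}. b k \<le> m - 4) \<and>
          (of_nat n :: rat) = 2 ^ m / 3 ^ l - (\<Sum>k=1..l. 2 ^ (b k) / 3 ^ k))})"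

end

theory Submission
  imports Defs
begin

lemma in_Lambda:
  fixes m t l :: nat and b :: "nat \<Rightarrow> nat"
  assumes m3: "m \<ge> 3" and t1: "t \<ge> 1" and ll: "l \<le> m - 3"
    and mono: "\<forall>k. 1 \<le> k \<and> k < l \<longrightarrow> b k < b (Suc k)"
    and bd: "\<forall>k\<in>{1..l}. b k \<le> m - 4"
    and eq: "(of_nat t :: rat) = 2 ^ m / 3 ^ l - (\<Sum>k=1..l. 2 ^ (b k) / 3 ^ k)"
  shows "t \<in> Lambda m"
proof (cases "m = 3")
  case True
  then have "l = 0" using ll by simp
  then have "(of_nat t :: rat) = 8" using eq True by simp
  then have "(of_nat t :: rat) = of_nat 8" by simp
  then have "t = 8" by (simp only: of_nat_eq_iff)
  then show ?thesis using True by (simp add: Lambda_def)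
next
  case False
  have "\<not> m \<le> 3" using False m3 by simp
  moreover have "\<exists>l (b :: nat \<Rightarrow> nat).
          l \<le> m - 3 \<and>
          (\<forall>k. 1 \<le> k \<and> k < l \<longrightarrow> b k < b (Suc k)) \<and>
          (\<forall>k\<in>{1..l}. b k \<le> m - 4) \<and>
          (of_nat t :: rat) = 2 ^ m / 3 ^ l - (\<Sum>k=1..l. 2 ^ (b k) / 3 ^ k)"
    using ll mono bd eq by blast
  ultimately show ?thesis unfolding Lambda_def using t1 by simp
qed

lemma b_growth:
  fixes b :: "nat \<Rightarrow> nat"
  assumes mono: "\<forall>k. 1 \<le> k \<and> k < l \<longrightarrow> b k < b (Suc k)"
  shows "k \<ge> 1 \<Longrightarrow> k \<le> l \<Longrightarrow> b k \<ge> b 1 + (k - 1)"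
proof (induction k)
  case 0 then show ?case by simp
next
  case (Suc k)
  show ?case
  proof (cases "k = 0")
    case True then show ?thesis by simp
  next
    case False
    then have "b k \<ge> b 1 + (k - 1)" using Suc by simp
    moreover have "b k < b (Suc k)" using mono Suc.prems False by simp
    ultimately show ?thesis using False by simp
  qed
qed

lemma A_eq:
  fixes b :: "nat \<Rightarrow> nat"
  shows "(of_nat (\<Sum>k=1..l. 2 ^ (b k) * 3 ^ (l - k)) :: rat) = 3 ^ l * (\<Sum>k=1..l. 2 ^ (b k) / 3 ^ k)"
proof -
  have "(of_nat (\<Sum>k=1..l. 2 ^ (b k) * 3 ^ (l - k)) :: rat) = (\<Sum>k=1..l. 2 ^ (b k) * 3 ^ (l - k))"
    by simp
  also have "\<dots> = (\<Sum>k=1..l. 3 ^ l * (2 ^ (b k) / 3 ^ k))"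
  proof (rule sum.cong)
    fix k assume "k \<in> {1..l}"
    then have "(3::rat) ^ l = 3 ^ (l - k) * 3 ^ k" by (simp add: power_add[symmetric])
    then show "(2::rat) ^ (b k) * 3 ^ (l - k) = 3 ^ l * (2 ^ (b k) / 3 ^ k)" by simp
  qed simp
  also have "\<dots> = 3 ^ l * (\<Sum>k=1..l. 2 ^ (b k) / 3 ^ k)" by (simp add: sum_distrib_left)
  finally show ?thesis .
qed

theorem mainTheorem1:
  fixes m n :: nat
  assumes "n \<in> Lambda (m + 1)"
  shows "collatzT n \<in> Lambda m"
proof (cases "m \<le> 2")
  case True
  then have "n = 2 ^ (m+1)" using assms by (simp add: Lambda_def)
  then have "collatzT n = 2 ^ m" by (simp add: collatzT_def)
  then show ?thesis using True by (simp add: Lambda_def)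
next
  case False
  then have m3: "m \<ge> 3" by simp
  from assms m3 obtain l b where n1: "n \<ge> 1" and ll: "l \<le> m - 2"
    and mono: "\<forall>k. 1 \<le> k \<and> k < l \<longrightarrow> b k < b (Suc k)"
    and bd: "\<forall>k\<in>{1..l}. b k \<le> m - 3"
    and eq: "(of_nat n :: rat) = 2 ^ (m+1) / 3 ^ l - (\<Sum>k=1..l. 2 ^ (b k) / 3 ^ k)"
    unfolding Lambda_def by auto
  define S where "S = (\<Sum>k=1..l. (2::rat) ^ (b k) / 3 ^ k)"
  define A where "A = (\<Sum>k=1..l. (2::nat) ^ (b k) * 3 ^ (l - k))"
  have AS: "(of_nat A :: rat) = 3 ^ l * S" unfolding A_def S_def by (rule A_eq)
  have "(of_nat (n * 3 ^ l + A) :: rat) = of_nat n * 3 ^ l + 3 ^ l * S" using AS by simp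
  also have "\<dots> = 2 ^ (m+1)" using eq unfolding S_def by (simp add: field_simps)
  also have "\<dots> = of_nat (2 ^ (m+1))" by simp
  finally have nA: "n * 3 ^ l + A = 2 ^ (m+1)" by (simp only: of_nat_eq_iff)
  show ?thesis
  proof (cases "l = 0")
    case True
    then have "(of_nat n :: rat) = 2 ^ (m+1)" using eq by simp
    also have "\<dots> = of_nat (2 ^ (m+1))" by simp
    finally have "n = 2 ^ (m+1)" by (simp only: of_nat_eq_iff)
    then have T: "collatzT n = 2 ^ m" by (simp add: collatzT_def)
    show ?thesis
      by (rule in_Lambda[where l=0 and b=b]) (use m3 T in simp_all)
  next
    case lpos: False
    have grow: "\<And>k. k \<ge> 1 \<Longrightarrow> k \<le> l \<Longrightarrow> b k \<ge> b 1 + (k - 1)"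
      using b_growth[OF mono] by blast
    show ?thesis
    proof (cases "b 1 \<ge> 1")
      case b1: True
      have bk1: "\<And>k. k \<in> {1..l} \<Longrightarrow> b k \<ge> 1" using grow b1 by force
      have "even A" unfolding A_def
      proof (rule dvd_sum)
        fix k assume "k \<in> {1..l}"
        then have "b k \<ge> 1" by (rule bk1)
        then show "(2::nat) dvd 2 ^ (b k) * 3 ^ (l - k)"
          by (intro dvd_mult2 dvd_power) simp
      qed
      moreover have "even ((2::nat) ^ (m+1))" by simp
      ultimately have "even (n * 3 ^ l)" using nA by (metis dvd_add_left_iff)
      then have ev: "even n" by simp
      then have T: "collatzT n = n div 2" by (simp add: collatzT_def)
      have bl: "b l \<ge> l" using grow[of l] lpos b1 by simp
      have "b l \<le> m - 3" using bd lpos by simp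
      then have l3: "l \<le> m - 3" using bl by linarith
      have Sh: "S = 2 * (\<Sum>k=1..l. 2 ^ (b k - 1) / 3 ^ k)"
        unfolding S_def sum_distrib_left
      proof (rule sum.cong)
        fix k assume "k \<in> {1..l}"
        then have "b k = Suc (b k - 1)" using bk1 by force
        then have "(2::rat) ^ b k = 2 * 2 ^ (b k - 1)" by (metis power_Suc)
        then show "(2::rat) ^ b k / 3 ^ k = 2 * (2 ^ (b k - 1) / 3 ^ k)" by simp
      qed simp
      obtain q where q: "n = 2 * q" using ev by (rule evenE)
      have "(of_nat (collatzT n) :: rat) = of_nat n / 2" using T q by simp
      also have "\<dots> = 2 ^ m / 3 ^ l - (\<Sum>k=1..l. 2 ^ (b k - 1) / 3 ^ k)"
        using eq unfolding S_def[symmetric] Sh by (simp add: field_simps)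
      finally have eqT: "(of_nat (collatzT n) :: rat) = 2 ^ m / 3 ^ l - (\<Sum>k=1..l. 2 ^ ((\<lambda>k. b k - 1) k) / 3 ^ k)" by simp
      have T1: "collatzT n \<ge> 1" using T ev n1 by (auto elim: evenE)
      show ?thesis
      proof (rule in_Lambda[OF m3 T1 l3 _ _ eqT])
        show "\<forall>k. 1 \<le> k \<and> k < l \<longrightarrow> b k - 1 < b (Suc k) - 1"
          using mono bk1 by (metis atLeastAtMost_iff diff_less_mono less_imp_le_nat)
        show "\<forall>k\<in>{1..l}. b k - 1 \<le> m - 4" using bd by force
      qed
    next
      case b1: False
      then have b10: "b 1 = 0" by simp
      obtain l0 where l0: "l = Suc l0" using lpos by (cases l) auto
      have bk1: "b k \<ge> 1" if "k \<in> {2..l}" for k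
      proof -
        have "b k \<ge> b 1 + (k - 1)" using grow[of k] that by simp
        moreover have "k \<ge> 2" using that by simp
        ultimately show ?thesis using b10 by linarith
      qed
      have "A = 2 ^ (b 1) * 3 ^ (l - 1) + (\<Sum>k=Suc 1..l. 2 ^ (b k) * 3 ^ (l - k))"
        unfolding A_def by (rule sum.atLeast_Suc_atMost) (use lpos in simp)
      then have Asplit: "A = 3 ^ l0 + (\<Sum>k=2..l. 2 ^ (b k) * 3 ^ (l - k))"
        using l0 b10 by (simp add: numeral_2_eq_2)
      have "even (\<Sum>k=2..l. (2::nat) ^ (b k) * 3 ^ (l - k))"
      proof (rule dvd_sum)
        fix k assume "k \<in> {2..l}"
        then have "b k \<ge> 1" by (rule bk1)
        then show "(2::nat) dvd 2 ^ (b k) * 3 ^ (l - k)" by (intro dvd_mult2 dvd_power) simp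
      qed
      then have "odd A" using Asplit by simp
      moreover have "even ((2::nat) ^ (m+1))" by simp
      moreover have "even (n * 3 ^ l + A)" using nA by simp
      ultimately have "odd (n * 3 ^ l)" by simp
      then have od: "odd n" by simp
      then have T: "collatzT n = (3 * n + 1) div 2" by (simp add: collatzT_def)
      have ev3: "even (3 * n + 1)" using od by simp
      have l3: "l0 \<le> m - 3" using ll l0 m3 by linarith
      have S3: "3 * S = 1 + (\<Sum>j=1..l0. 2 ^ (b (Suc j)) / 3 ^ j)"
      proof -
        have "3 * S = (\<Sum>k=1..l. 2 ^ (b k) / 3 ^ (k - 1))"
          unfolding S_def sum_distrib_left
        proof (rule sum.cong)
          fix k assume "k \<in> {1..l}"
          then have "k = Suc (k - 1)" by simp
          then have "(3::rat) ^ k = 3 * 3 ^ (k - 1)" by (metis power_Suc)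
          then show "3 * ((2::rat) ^ b k / 3 ^ k) = 2 ^ b k / 3 ^ (k - 1)" by simp
        qed simp
        also have "\<dots> = 2 ^ (b 1) / 3 ^ (1 - 1) + (\<Sum>k=Suc 1..l. 2 ^ (b k) / 3 ^ (k - 1))"
          by (rule sum.atLeast_Suc_atMost) (use lpos in simp)
        also have "\<dots> = 1 + (\<Sum>k=Suc 1..Suc l0. 2 ^ (b k) / 3 ^ (k - 1))"
          using l0 b10 by simp
        also have "\<dots> = 1 + (\<Sum>j=1..l0. 2 ^ (b (Suc j)) / 3 ^ j)"
          by (simp only: sum.shift_bounds_cl_Suc_ivl) simp
        finally show ?thesis .
      qed
      have Sh: "(\<Sum>j=1..l0. (2::rat) ^ (b (Suc j)) / 3 ^ j) = 2 * (\<Sum>j=1..l0. 2 ^ (b (Suc j) - 1) / 3 ^ j)"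
        unfolding sum_distrib_left
      proof (rule sum.cong)
        fix j assume "j \<in> {1..l0}"
        then have "b (Suc j) \<ge> 1" using bk1[of "Suc j"] l0 by simp
        then have "b (Suc j) = Suc (b (Suc j) - 1)" by simp
        then have "(2::rat) ^ b (Suc j) = 2 * 2 ^ (b (Suc j) - 1)" by (metis power_Suc)
        then show "(2::rat) ^ b (Suc j) / 3 ^ j = 2 * (2 ^ (b (Suc j) - 1) / 3 ^ j)" by simp
      qed simp
      obtain q where q: "3 * n + 1 = 2 * q" using ev3 by (rule evenE)
      have "(of_nat (3 * n + 1) :: rat) = 2 * of_nat q" unfolding q by simp
      then have "(3 * of_nat n + 1 :: rat) = 2 * of_nat q" by simp
      then have "(of_nat (collatzT n) :: rat) = (3 * of_nat n + 1) / 2" using T q by simp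
      also have "\<dots> = 2 ^ m / 3 ^ l0 - (\<Sum>j=1..l0. 2 ^ (b (Suc j) - 1) / 3 ^ j)"
      proof -
        have "3 * (of_nat n :: rat) = 3 * 2 ^ (m+1) / 3 ^ l - 3 * S" using eq unfolding S_def by (simp add: algebra_simps)
        also have "3 * (2::rat) ^ (m+1) / 3 ^ l = 2 * 2 ^ m / 3 ^ l0" using l0 by simp
        finally have "3 * (of_nat n :: rat) + 1 = 2 * 2 ^ m / 3 ^ l0 - 2 * (\<Sum>j=1..l0. 2 ^ (b (Suc j) - 1) / 3 ^ j)"
          using S3 Sh by simp
        then show ?thesis by (simp add: field_simps)
      qed
      finally have eqT: "(of_nat (collatzT n) :: rat) = 2 ^ m / 3 ^ l0 - (\<Sum>k=1..l0. 2 ^ ((\<lambda>j. b (Suc j) - 1) k) / 3 ^ k)" by simp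
      have T1: "collatzT n \<ge> 1" using T q n1 by simp
      show ?thesis
      proof (rule in_Lambda[OF m3 T1 l3 _ _ eqT])
        show "\<forall>k. 1 \<le> k \<and> k < l0 \<longrightarrow> b (Suc k) - 1 < b (Suc (Suc k)) - 1"
        proof (intro allI impI)
          fix k assume k: "1 \<le> k \<and> k < l0"
          then have "b (Suc k) < b (Suc (Suc k))" using mono l0 by simp
          moreover have "b (Suc k) \<ge> 1" using bk1[of "Suc k"] k l0 by simp
          ultimately show "b (Suc k) - 1 < b (Suc (Suc k)) - 1" by simp
        qed
        show "\<forall>k\<in>{1..l0}. b (Suc k) - 1 \<le> m - 4"
        proof
          fix k assume "k \<in> {1..l0}"
          then have "b (Suc k) \<le> m - 3" using bd l0 by simp
          then show "b (Suc k) - 1 \<le> m - 4" by linarith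
        qed
      qed
    qed
  qed
qed

end
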